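(* Let $L:\mathbb{R}^d\times\mathbb{R}^{d+1}\to\mathbb{R}$ be such that $L(w,z)$ is convex in $w$ for every $z$, let $\nabla_1 L(w,z)$ denote a (fixed choice of) sub-gradient of $L(\cdot,z)$ at $w$, and assume there are constants $A,B\ge0$ with $\|\nabla_1 L(w,z)\|^2\le A L(w,z)+B$ for all $w\in\mathbb{R}^d$, $z\in\mathbb{R}^{d+1}$. Let $z_1,\dots,z_n\in\mathbb{R}^{d+1}$ be training data, let $g\ge 0$, and let $\eta>0$ with $1-0.5A\eta>0$. For $w\in\mathbb{R}^d$ and $\gamma\ge0$ set \[ R(w,\gamma)=\frac1n\sum_{i=1}^n L(w,z_i)+\gamma\|w\|_1 .\] Let $\hat w_1=w_1=0$ and define recursively for $t=1,2,\ldots$ \[ w_{t+1}=T\big(w_t-\eta\nabla_1 L(w_t,z_{i_t}),\ g\eta\big),\qquad \hat w_{t+1}=\hat w_t+\frac{w_{t+1}-\hat w_t}{t+1}, \] where $i_1,i_2,\ldots$ are independent and each uniformly distributed on $\{1,\dots,n\}$. Then for every $T\ge1$ and every $\bar w\in\mathbb{R}^d$, \[ \mathbf{E}_{i_1,\dots,i_T}\Big[(1-0.5A\eta)\,R\Big(\hat w_T,\tfrac{g}{1-0.5A\eta}\Big)\Big] \le \mathbf{E}_{i_1,\dots,i_T}\Big[\frac{1-0.5A\eta}{T}\sum_{i=1}^T R\Big(w_i,\tfrac{g}{1-0.5A\eta}\Big)\Big] \le \frac{\eta}{2}B+\frac{\|\bar w\|^2}{2\eta T}+R(\bar w,g). 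\]
   Context: $\|\cdot\|$ is the Euclidean norm and $\|\cdot\|_1$ the $1$-norm. For $v\in\mathbb{R}^d$ and $\alpha\ge0$, $T(v,\alpha)=(T(v_1,\alpha),\dots,T(v_d,\alpha))$ with $T(v_j,\alpha)=\max(0,v_j-\alpha)$ if $v_j>0$ and $T(v_j,\alpha)=\min(0,v_j+\alpha)$ otherwise. *)

theory Defs
  imports "HOL-Analysis.Analysis"
begin

definition soft_thr :: "real \<Rightarrow> real \<Rightarrow> real" where
  "soft_thr v \<alpha> = (if v > 0 then max 0 (v - \<alpha>) else min 0 (v + \<alpha>))"

definition soft_thr_vec :: "real ^ 'd \<Rightarrow> real \<Rightarrow> real ^ 'd" where
  "soft_thr_vec v \<alpha> = (\<chi> j. soft_thr (v $ j) \<alpha>)"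

definition norm1 :: "real ^ 'd \<Rightarrow> real" where
  "norm1 w = (\<Sum>j\<in>UNIV. \<bar>w $ j\<bar>)"

definition is_subgradient :: "(real ^ 'd \<Rightarrow> real) \<Rightarrow> real ^ 'd \<Rightarrow> real ^ 'd \<Rightarrow> bool" where
  "is_subgradient f w v \<longleftrightarrow> (\<forall>u. f u \<ge> f w + v \<bullet> (u - w))"

definition emp_risk :: "(real ^ 'd \<Rightarrow> 'z \<Rightarrow> real) \<Rightarrow> (nat \<Rightarrow> 'z) \<Rightarrow> nat \<Rightarrow> real ^ 'd \<Rightarrow> real \<Rightarrow> real" where
  "emp_risk L z n w \<gamma> = (1 / real n) * (\<Sum>i=1..n. L w (z i)) + \<gamma> * norm1 w"

text \<open>Iterates w_t (1-based: w 1 = 0, w (t+1) = T(w_t - eta G(w_t, z_{i_t}), g eta)),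
  driven by the index sequence i. The value at 0 is an irrelevant dummy.\<close>
fun sgd_w :: "(real ^ 'd \<Rightarrow> 'z \<Rightarrow> real ^ 'd) \<Rightarrow> (nat \<Rightarrow> 'z) \<Rightarrow> real \<Rightarrow> real \<Rightarrow> (nat \<Rightarrow> nat)
     \<Rightarrow> nat \<Rightarrow> real ^ 'd" where
  "sgd_w G z \<eta> g i 0 = 0"
| "sgd_w G z \<eta> g i (Suc t) =
     (if t = 0 then 0
      else soft_thr_vec (sgd_w G z \<eta> g i t - \<eta> *\<^sub>R G (sgd_w G z \<eta> g i t) (z (i t))) (g * \<eta>))"

fun sgd_what :: "(real ^ 'd \<Rightarrow> 'z \<Rightarrow> real ^ 'd) \<Rightarrow> (nat \<Rightarrow> 'z) \<Rightarrow> real \<Rightarrow> real \<Rightarrow> (nat \<Rightarrow> nat)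
     \<Rightarrow> nat \<Rightarrow> real ^ 'd" where
  "sgd_what G z \<eta> g i 0 = 0"
| "sgd_what G z \<eta> g i (Suc t) =
     (if t = 0 then 0
      else sgd_what G z \<eta> g i t
           + (1 / real (Suc t)) *\<^sub>R (sgd_w G z \<eta> g i (Suc t) - sgd_what G z \<eta> g i t))"

text \<open>Index sequences (i_1,...,i_T) in {1..n}^T, as lists; i_t = xs ! (t-1).\<close>
definition idx_seqs :: "nat \<Rightarrow> nat \<Rightarrow> nat list set" where
  "idx_seqs n T = {xs. length xs = T \<and> set xs \<subseteq> {1..n}}"

definition idx_of :: "nat list \<Rightarrow> nat \<Rightarrow> nat" where
  "idx_of xs t = xs ! (t - 1)"

text \<open>Expectation over i_1..i_T independent and uniform on {1..n}.\<close>
definition expect_idx :: "nat \<Rightarrow> nat \<Rightarrow> ((nat \<Rightarrow> nat) \<Rightarrow> real) \<Rightarrow> real" where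
  "expect_idx n T F = (\<Sum>xs\<in>idx_seqs n T. F (idx_of xs)) / real n ^ T"

end

theory Submission imports Defs begin


lemma soft_thr_prox:
  assumes a: "a \<ge> 0"
  shows "(soft_thr v a - u)^2 \<le> (v - u)^2 + 2 * a * (\<bar>u\<bar> - \<bar>soft_thr v a\<bar>)"
proof -
  have au: "a * u \<le> a * \<bar>u\<bar>" "- (a * u) \<le> a * \<bar>u\<bar>"
    using mult_left_mono[OF abs_ge_self a, of u] mult_left_mono[OF abs_ge_minus_self a, of u] by simp_all
  have aa: "0 \<le> a * a" "0 \<le> v * v" by simp_all
  have sq: "(v - u)^2 = v * v - 2 * (v * u) + u * u" by (simp add: power2_eq_square algebra_simps)
  show ?thesis
  proof (cases "v > 0")
    case True
    show ?thesis
    proof (cases "v > a")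
      case True
      with \<open>v>0\<close> have eq: "soft_thr v a = v - a" by (simp add: soft_thr_def)
      have E: "(v - a - u)^2 = v * v - 2 * (v * u) + u * u - 2 * (a * v) + 2 * (a * u) + a * a"
        by (simp add: power2_eq_square algebra_simps)
      have R: "2 * a * (\<bar>u\<bar> - \<bar>v - a\<bar>) = 2 * (a * \<bar>u\<bar>) - 2 * (a * v) + 2 * (a * a)"
        using True by (simp add: algebra_simps)
      show ?thesis unfolding eq sq E R using au aa by linarith
    next
      case False
      with \<open>v>0\<close> have eq: "soft_thr v a = 0" by (simp add: soft_thr_def)
      have vu: "v * u \<le> a * \<bar>u\<bar>"
      proof -
        have "v * u \<le> v * \<bar>u\<bar>" using mult_left_mono[OF abs_ge_self, of v u] \<open>v>0\<close> by simp
        also have "\<dots> \<le> a * \<bar>u\<bar>" using mult_right_mono[OF _ abs_ge_zero, of v a u] False by simp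
        finally show ?thesis .
      qed
      have E: "(0 - u)^2 = u * u" by (simp add: power2_eq_square)
      show ?thesis unfolding eq sq E using vu aa by simp
    qed
  next
    case False
    show ?thesis
    proof (cases "v < - a")
      case True
      with False have eq: "soft_thr v a = v + a" by (simp add: soft_thr_def)
      have E: "(v + a - u)^2 = v * v - 2 * (v * u) + u * u + 2 * (a * v) - 2 * (a * u) + a * a"
        by (simp add: power2_eq_square algebra_simps)
      have R: "2 * a * (\<bar>u\<bar> - \<bar>v + a\<bar>) = 2 * (a * \<bar>u\<bar>) + 2 * (a * v) + 2 * (a * a)"
        using True by (simp add: algebra_simps)
      show ?thesis unfolding eq sq E R using au aa by linarith
    next
      case F2: False
      with False have eq: "soft_thr v a = 0" by (simp add: soft_thr_def)
      have vu: "v * u \<le> a * \<bar>u\<bar>"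
      proof -
        have "v * u = (- v) * (- u)" by simp
        also have "\<dots> \<le> (- v) * \<bar>u\<bar>" using mult_left_mono[OF abs_ge_minus_self, of "-v" u] False by simp
        also have "\<dots> \<le> a * \<bar>u\<bar>" using mult_right_mono[OF _ abs_ge_zero, of "-v" a u] F2 by simp
        finally show ?thesis .
      qed
      have E: "(0 - u)^2 = u * u" by (simp add: power2_eq_square)
      show ?thesis unfolding eq sq E using vu aa by simp
    qed
  qed
qed

lemma norm_sq_vec: "(norm (x::real^'d))^2 = (\<Sum>j\<in>UNIV. (x$j)^2)"
  unfolding norm_vec_def L2_set_def by (simp add: sum_nonneg)

lemma soft_thr_vec_prox:
  assumes "a \<ge> 0"
  shows "(norm (soft_thr_vec v a - u))^2 \<le> (norm (v - u))^2 + 2 * a * (norm1 u - norm1 (soft_thr_vec v a))"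
proof -
  have "(norm (soft_thr_vec v a - u))^2 = (\<Sum>j\<in>UNIV. (soft_thr (v$j) a - u$j)^2)"
    by (simp add: norm_sq_vec soft_thr_vec_def)
  also have "\<dots> \<le> (\<Sum>j\<in>UNIV. (v$j - u$j)^2 + 2 * a * (\<bar>u$j\<bar> - \<bar>soft_thr (v$j) a\<bar>))"
    by (rule sum_mono) (rule soft_thr_prox[OF assms])
  also have "\<dots> = (norm (v - u))^2 + 2 * a * (norm1 u - norm1 (soft_thr_vec v a))"
    by (simp add: norm_sq_vec sum.distrib sum_distrib_left sum_subtractf norm1_def soft_thr_vec_def algebra_simps)
  finally show ?thesis .
qed


lemma norm_diff_scale_sq:
  fixes x y :: "real^'d"
  shows "(norm (x - e *\<^sub>R y))^2 = (norm x)^2 - 2 * e * (y \<bullet> x) + e^2 * (norm y)^2"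
  unfolding power2_norm_eq_inner inner_diff_left inner_diff_right inner_scaleR_left inner_scaleR_right inner_commute[of y x]
  by (simp only: power2_eq_square) algebra

lemma sgd_step:
  fixes L :: "real ^ 'd \<Rightarrow> 'z \<Rightarrow> real"
    and G :: "real ^ 'd \<Rightarrow> 'z \<Rightarrow> real ^ 'd"
  assumes subgrad: "\<And>w zz. is_subgradient (\<lambda>u. L u zz) w (G w zz)"
    and growth: "\<And>w zz. (norm (G w zz))\<^sup>2 \<le> A * L w zz + B"
    and g: "g \<ge> 0" and eta: "\<eta> > 0" and t: "t \<ge> 1"
  shows "2 * \<eta> * (1 - 0.5 * A * \<eta>) * L (sgd_w G z \<eta> g i t) (z (i t))
          + 2 * \<eta> * g * norm1 (sgd_w G z \<eta> g i (Suc t))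
      \<le> (norm (sgd_w G z \<eta> g i t - u))^2 - (norm (sgd_w G z \<eta> g i (Suc t) - u))^2
         + 2 * \<eta> * L u (z (i t)) + \<eta>^2 * B + 2 * \<eta> * g * norm1 u"
proof -
  define w where "w = sgd_w G z \<eta> g i t"
  define zz where "zz = z (i t)"
  define v where "v = G w zz"
  define w' where "w' = sgd_w G z \<eta> g i (Suc t)"
  have w'eq: "w' = soft_thr_vec (w - \<eta> *\<^sub>R v) (g * \<eta>)"
    using t by (simp add: w'_def w_def v_def zz_def)
  have prox: "(norm (w' - u))^2 \<le> (norm (w - \<eta> *\<^sub>R v - u))^2 + 2 * (g * \<eta>) * (norm1 u - norm1 w')"
    unfolding w'eq by (rule soft_thr_vec_prox) (use g eta in simp)
  have ex: "(norm (w - \<eta> *\<^sub>R v - u))^2 = (norm (w - u))^2 - 2 * \<eta> * (v \<bullet> (w - u)) + \<eta>^2 * (norm v)^2"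
    using norm_diff_scale_sq[of "w - u" \<eta> v] by (simp add: algebra_simps)
  have sg: "L u zz \<ge> L w zz + v \<bullet> (u - w)"
    using subgrad[of zz w] unfolding is_subgradient_def v_def by blast
  have sg2: "v \<bullet> (w - u) \<ge> L w zz - L u zz"
    using sg by (simp add: inner_diff_right)
  have m1: "\<eta> * (L w zz - L u zz) \<le> \<eta> * (v \<bullet> (w - u))"
    using mult_left_mono[OF sg2] eta by simp
  have m2: "\<eta>^2 * (norm v)^2 \<le> \<eta>^2 * (A * L w zz + B)"
    using mult_left_mono[OF growth[of w zz]] unfolding v_def by simp
  have "2 * \<eta> * (1 - 0.5 * A * \<eta>) * L w zz + 2 * \<eta> * g * norm1 w'
      \<le> (norm (w - u))^2 - (norm (w' - u))^2 + 2 * \<eta> * L u zz + \<eta>^2 * B + 2 * \<eta> * g * norm1 u"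
    using prox ex m1 m2 by (simp add: algebra_simps power2_eq_square)
  then show ?thesis by (simp add: w_def w'_def zz_def)
qed


lemma idx_seqs_0: "idx_seqs n 0 = {[]}"
  by (auto simp: idx_seqs_def)

lemma idx_seqs_Suc: "idx_seqs n (Suc m) = (\<lambda>(xs,k). xs @ [k]) ` (idx_seqs n m \<times> {1..n})"
proof (rule set_eqI, rule iffI)
  fix ys assume ys: "ys \<in> idx_seqs n (Suc m)"
  then have "ys \<noteq> []" by (auto simp: idx_seqs_def)
  then obtain xs k where "ys = xs @ [k]" by (metis rev_exhaust)
  with ys show "ys \<in> (\<lambda>(xs,k). xs @ [k]) ` (idx_seqs n m \<times> {1..n})"
    by (auto simp: idx_seqs_def intro!: image_eqI[where x="(xs,k)"])
qed (auto simp: idx_seqs_def)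

lemma finite_idx_seqs: "finite (idx_seqs n m)"
  by (induction m) (auto simp: idx_seqs_0 idx_seqs_Suc)

lemma sum_idx_Suc:
  "(\<Sum>xs\<in>idx_seqs n (Suc m). f xs) = (\<Sum>xs\<in>idx_seqs n m. \<Sum>k=1..n. f (xs @ [k]))"
proof -
  have inj: "inj_on (\<lambda>(xs,k). xs @ [k]) (idx_seqs n m \<times> {1..n})"
    by (auto simp: inj_on_def)
  show ?thesis
    unfolding idx_seqs_Suc sum.reindex[OF inj]
    by (simp add: sum.cartesian_product finite_idx_seqs split_def)
qed

lemma card_idx_seqs: "(\<Sum>xs\<in>idx_seqs n m. (1::real)) = real n ^ m"
proof (induction m)
  case 0 show ?case by (simp add: idx_seqs_0)
next
  case (Suc m)
  have "(\<Sum>xs\<in>idx_seqs n (Suc m). (1::real)) = (\<Sum>xs\<in>idx_seqs n m. \<Sum>k=1..n. (1::real))"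
    by (rule sum_idx_Suc)
  also have "\<dots> = real n * (\<Sum>xs\<in>idx_seqs n m. (1::real))"
    by (simp add: sum_distrib_left[symmetric] del: sum_constant) (simp add: mult.commute)
  finally show ?case using Suc.IH by simp
qed

lemma idx_of_append:
  "1 \<le> s \<Longrightarrow> s \<le> length xs \<Longrightarrow> idx_of (xs @ ys) s = idx_of xs s"
  by (auto simp: idx_of_def nth_append)

lemma idx_of_last: "idx_of (xs @ [k]) (Suc (length xs)) = k"
  by (simp add: idx_of_def)

lemma len_idx: "xs \<in> idx_seqs n m \<Longrightarrow> length xs = m"
  by (simp add: idx_seqs_def)

lemma sgd_w_dep:
  "(\<And>s. 1 \<le> s \<Longrightarrow> s < t \<Longrightarrow> i s = i' s) \<Longrightarrow> sgd_w G z \<eta> g i t = sgd_w G z \<eta> g i' t"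
proof (induction t)
  case 0 then show ?case by simp
next
  case (Suc t)
  then have "sgd_w G z \<eta> g i t = sgd_w G z \<eta> g i' t" by simp
  moreover have "t \<noteq> 0 \<Longrightarrow> i t = i' t" using Suc.prems by simp
  ultimately show ?case by simp
qed

lemma key_expect:
  fixes H :: "(nat \<Rightarrow> nat) \<Rightarrow> nat \<Rightarrow> real"
  assumes dep: "\<And>i i'. (\<And>s. 1 \<le> s \<Longrightarrow> s < t \<Longrightarrow> i s = i' s) \<Longrightarrow> H i = H i'"
    and t: "1 \<le> t" and n: "n \<ge> 1"
  shows "t \<le> m \<Longrightarrow> (\<Sum>xs\<in>idx_seqs n m. H (idx_of xs) (idx_of xs t))
       = (\<Sum>xs\<in>idx_seqs n m. (1 / real n) * (\<Sum>k=1..n. H (idx_of xs) k))"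
proof (induction m)
  case 0 then show ?case using t by simp
next
  case (Suc m)
  have ext: "H (idx_of (xs @ [k])) = H (idx_of xs)" if "length xs = m" "t \<le> Suc m" for xs k
    by (rule dep) (use that in \<open>simp add: idx_of_append\<close>)
  show ?case
  proof (cases "t = Suc m")
    case True
    have "(\<Sum>xs\<in>idx_seqs n (Suc m). H (idx_of xs) (idx_of xs t))
        = (\<Sum>xs\<in>idx_seqs n m. \<Sum>k=1..n. H (idx_of xs) k)"
      unfolding sum_idx_Suc
      by (rule sum.cong[OF refl]) (auto simp: ext len_idx True idx_of_last dest!: len_idx)
    also have "\<dots> = (\<Sum>xs\<in>idx_seqs n (Suc m). (1 / real n) * (\<Sum>k=1..n. H (idx_of xs) k))"
      unfolding sum_idx_Suc
      by (rule sum.cong[OF refl]) (use n in \<open>auto simp: ext True dest!: len_idx\<close>)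
    finally show ?thesis .
  next
    case False
    with Suc.prems have tm: "t \<le> m" by simp
    have lt: "t \<le> length xs" if "xs \<in> idx_seqs n m" for xs using that tm by (simp add: len_idx)
    have "(\<Sum>xs\<in>idx_seqs n (Suc m). H (idx_of xs) (idx_of xs t))
        = (\<Sum>xs\<in>idx_seqs n m. real n * H (idx_of xs) (idx_of xs t))"
      unfolding sum_idx_Suc
      by (rule sum.cong[OF refl]) (use t tm in \<open>auto simp: ext idx_of_append lt dest!: len_idx\<close>)
    also have "\<dots> = real n * (\<Sum>xs\<in>idx_seqs n m. H (idx_of xs) (idx_of xs t))"
      by (simp add: sum_distrib_left)
    also have "\<dots> = real n * (\<Sum>xs\<in>idx_seqs n m. (1 / real n) * (\<Sum>k=1..n. H (idx_of xs) k))"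
      using Suc.IH tm by simp
    also have "\<dots> = (\<Sum>xs\<in>idx_seqs n (Suc m). (1 / real n) * (\<Sum>k=1..n. H (idx_of xs) k))"
      unfolding sum_idx_Suc sum_distrib_left
      by (rule sum.cong[OF refl]) (use tm n in \<open>auto simp: ext sum_divide_distrib[symmetric] dest!: len_idx\<close>)
    finally show ?thesis .
  qed
qed


lemma norm1_nonneg: "norm1 w \<ge> 0" by (simp add: norm1_def sum_nonneg)
lemma norm1_zero: "norm1 0 = 0" by (simp add: norm1_def)

lemma pw1:
  assumes c: "c > 0" and T: "T \<ge> 1" and g: "g \<ge> 0"
  shows "(c / real T) * (\<Sum>t=1..T. emp_risk L z n (sgd_w G z \<eta> g i t) (g / c))
    \<le> (1 / real T) * (\<Sum>t=1..T. c * ((1 / real n) * (\<Sum>k=1..n. L (sgd_w G z \<eta> g i t) (z k)))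
                                + g * norm1 (sgd_w G z \<eta> g i (Suc t)))"
proof -
  define W where "W = sgd_w G z \<eta> g i"
  define F where "F w = (1 / real n) * (\<Sum>k=1..n. L w (z k))" for w
  have tel: "(\<Sum>t=1..T. norm1 (W (Suc t)) - norm1 (W t)) = norm1 (W (Suc T)) - norm1 (W 1)"
    by (rule sum_Suc_diff) (use T in simp)
  have W1: "W 1 = 0" by (simp add: W_def)
  have s: "(\<Sum>t=1..T. norm1 (W t)) \<le> (\<Sum>t=1..T. norm1 (W (Suc t)))"
    using tel W1 norm1_nonneg[of "W (Suc T)"] by (simp add: sum_subtractf norm1_zero)
  have s2: "g * (\<Sum>t=1..T. norm1 (W t)) \<le> g * (\<Sum>t=1..T. norm1 (W (Suc t)))"
    using mult_left_mono[OF s g] .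
  have eq: "c * emp_risk L z n w (g / c) = c * F w + g * norm1 w" for w
    using c by (simp add: emp_risk_def F_def algebra_simps)
  have "(c / real T) * (\<Sum>t=1..T. emp_risk L z n (W t) (g / c))
      = (1 / real T) * (\<Sum>t=1..T. c * F (W t) + g * norm1 (W t))"
    by (simp add: sum_distrib_left[symmetric] eq[symmetric])
  also have "\<dots> \<le> (1 / real T) * (\<Sum>t=1..T. c * F (W t) + g * norm1 (W (Suc t)))"
    using s2 T by (intro mult_left_mono) (simp_all add: sum.distrib sum_distrib_left)
  finally show ?thesis by (simp add: W_def F_def)
qed

lemma pw2:
  fixes L :: "real ^ 'd \<Rightarrow> 'z \<Rightarrow> real"
    and G :: "real ^ 'd \<Rightarrow> 'z \<Rightarrow> real ^ 'd"
  assumes subgrad: "\<And>w zz. is_subgradient (\<lambda>u. L u zz) w (G w zz)"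
    and growth: "\<And>w zz. (norm (G w zz))\<^sup>2 \<le> A * L w zz + B"
    and g: "g \<ge> 0" and eta: "\<eta> > 0" and T: "T \<ge> 1"
  shows "(1 / real T) * (\<Sum>t=1..T. (1 - 0.5 * A * \<eta>) * L (sgd_w G z \<eta> g i t) (z (i t))
                                + g * norm1 (sgd_w G z \<eta> g i (Suc t)))
     \<le> (1 / (2 * \<eta> * real T)) * ((norm u)^2 + (\<Sum>t=1..T. 2 * \<eta> * L u (z (i t)))
          + real T * (\<eta>^2 * B + 2 * \<eta> * g * norm1 u))"
proof -
  define W where "W = sgd_w G z \<eta> g i"
  define D where "D t = (norm (W t - u))^2" for t
  define c where "c = 1 - 0.5 * A * \<eta>"
  have st: "2 * \<eta> * (c * L (W t) (z (i t)) + g * norm1 (W (Suc t)))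
      \<le> (D t - D (Suc t)) + (2 * \<eta> * L u (z (i t)) + (\<eta>^2 * B + 2 * \<eta> * g * norm1 u))"
    if "t \<in> {1..T}" for t
    using sgd_step[OF subgrad growth g eta, where t=t and z=z and i=i and u=u] that
    by (simp add: W_def D_def c_def algebra_simps)
  have "2 * \<eta> * (\<Sum>t=1..T. c * L (W t) (z (i t)) + g * norm1 (W (Suc t)))
      \<le> (\<Sum>t=1..T. (D t - D (Suc t)) + (2 * \<eta> * L u (z (i t)) + (\<eta>^2 * B + 2 * \<eta> * g * norm1 u)))"
    unfolding sum_distrib_left by (rule sum_mono) (rule st)
  also have "\<dots> = (D 1 - D (Suc T)) + (\<Sum>t=1..T. 2 * \<eta> * L u (z (i t))) + real T * (\<eta>^2 * B + 2 * \<eta> * g * norm1 u)"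
  proof -
    have "(\<Sum>t=1..T. D t - D (Suc t)) = - (\<Sum>t=1..T. D (Suc t) - D t)"
      by (simp add: sum_negf[symmetric])
    also have "\<dots> = D 1 - D (Suc T)" using sum_Suc_diff[of 1 T D] T by simp
    finally show ?thesis by (simp add: sum.distrib)
  qed
  also have "\<dots> \<le> (norm u)^2 + (\<Sum>t=1..T. 2 * \<eta> * L u (z (i t))) + real T * (\<eta>^2 * B + 2 * \<eta> * g * norm1 u)"
    by (simp add: D_def W_def)
  finally have main: "2 * \<eta> * (\<Sum>t=1..T. c * L (W t) (z (i t)) + g * norm1 (W (Suc t)))
     \<le> (norm u)^2 + (\<Sum>t=1..T. 2 * \<eta> * L u (z (i t))) + real T * (\<eta>^2 * B + 2 * \<eta> * g * norm1 u)" .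
  have pos: "2 * \<eta> * real T > 0" using eta T by simp
  have "(1 / real T) * (\<Sum>t=1..T. c * L (W t) (z (i t)) + g * norm1 (W (Suc t)))
     = (1 / (2 * \<eta> * real T)) * (2 * \<eta> * (\<Sum>t=1..T. c * L (W t) (z (i t)) + g * norm1 (W (Suc t))))"
    using eta by simp
  also have "\<dots> \<le> (1 / (2 * \<eta> * real T)) * ((norm u)^2 + (\<Sum>t=1..T. 2 * \<eta> * L u (z (i t))) + real T * (\<eta>^2 * B + 2 * \<eta> * g * norm1 u))"
    using main pos by (intro mult_left_mono) simp_all
  finally show ?thesis by (simp add: W_def c_def)
qed


lemma what_avg: "t \<ge> 1 \<Longrightarrow> sgd_what G z \<eta> g i t = (1 / real t) *\<^sub>R (\<Sum>s=1..t. sgd_w G z \<eta> g i s)"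
proof (induction t)
  case 0 then show ?case by simp
next
  case (Suc t)
  show ?case
  proof (cases "t = 0")
    case True then show ?thesis by simp
  next
    case False
    define S where "S = (\<Sum>s=1..t. sgd_w G z \<eta> g i s)"
    define w where "w = sgd_w G z \<eta> g i (Suc t)"
    have IH: "sgd_what G z \<eta> g i t = (1 / real t) *\<^sub>R S" using Suc False by (simp add: S_def)
    have sum: "(\<Sum>s=1..Suc t. sgd_w G z \<eta> g i s) = S + w" by (simp add: S_def w_def)
    have "sgd_what G z \<eta> g i (Suc t) = (1 / real t) *\<^sub>R S + (1 / real (Suc t)) *\<^sub>R (w - (1 / real t) *\<^sub>R S)"
      using False IH by (simp add: w_def)
    also have "\<dots> = (1 / real (Suc t)) *\<^sub>R (S + w)"
    proof -
      have "(1 / real t) - (1 / real (Suc t)) * (1 / real t) = 1 / real (Suc t)"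
      proof -
        have tp: "real t > 0" using False by simp
        then have "real t + real t * real t > 0" by (simp add: add_pos_pos)
        with tp show ?thesis by (simp add: field_simps)
      qed
      have "(1 / real t) *\<^sub>R S + (1 / real (Suc t)) *\<^sub>R (w - (1 / real t) *\<^sub>R S)
          = ((1 / real t) - (1 / real (Suc t)) * (1 / real t)) *\<^sub>R S + (1 / real (Suc t)) *\<^sub>R w"
        by (simp add: scaleR_diff_right scaleR_left_diff_distrib)
      also have "\<dots> = (1 / real (Suc t)) *\<^sub>R S + (1 / real (Suc t)) *\<^sub>R w"
        by (simp only: \<open>(1 / real t) - (1 / real (Suc t)) * (1 / real t) = 1 / real (Suc t)\<close>)
      also have "\<dots> = (1 / real (Suc t)) *\<^sub>R (S + w)" by (simp add: scaleR_add_right)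
      finally show ?thesis .
    qed
    finally show ?thesis using sum by simp
  qed
qed

lemma convex_on_sum_fun:
  assumes "finite I" "\<And>i. i \<in> I \<Longrightarrow> convex_on UNIV (f i)"
  shows "convex_on UNIV (\<lambda>x. \<Sum>i\<in>I. f i x)"
  using assms
proof (induction I rule: finite_induct)
  case empty then show ?case by (simp add: convex_on_const)
next
  case (insert a I) then show ?case by (simp add: convex_on_add)
qed

lemma convex_norm1: "convex_on UNIV (norm1 :: real^'d \<Rightarrow> real)"
proof (rule convex_onI)
  fix t :: real and x y :: "real^'d" assume t: "t > 0" "t < 1"
  have "norm1 ((1 - t) *\<^sub>R x + t *\<^sub>R y) = (\<Sum>j\<in>UNIV. \<bar>(1 - t) * x$j + t * y$j\<bar>)"
    by (simp add: norm1_def)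
  also have "\<dots> \<le> (\<Sum>j\<in>UNIV. (1 - t) * \<bar>x$j\<bar> + t * \<bar>y$j\<bar>)"
    by (rule sum_mono) (rule order_trans[OF abs_triangle_ineq], use t in \<open>simp add: abs_mult\<close>)
  also have "\<dots> = (1 - t) * norm1 x + t * norm1 y"
    by (simp add: norm1_def sum.distrib sum_distrib_left)
  finally show "norm1 ((1 - t) *\<^sub>R x + t *\<^sub>R y) \<le> (1 - t) * norm1 x + t * norm1 y" .
qed simp

lemma convex_emp_risk:
  assumes "\<And>zz. convex_on UNIV (\<lambda>w. L w zz)" "\<gamma> \<ge> 0"
  shows "convex_on UNIV (\<lambda>w. emp_risk L z n w \<gamma>)"
  unfolding emp_risk_def
  by (intro convex_on_add convex_on_cmul convex_on_sum_fun convex_norm1 assms) simp_all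

lemma jensen_risk:
  assumes "\<And>zz. convex_on UNIV (\<lambda>w. L w zz)" "\<gamma> \<ge> 0" "T \<ge> 1"
  shows "emp_risk L z n ((1 / real T) *\<^sub>R (\<Sum>s=1..T. w s)) \<gamma>
       \<le> (1 / real T) * (\<Sum>s=1..T. emp_risk L z n (w s) \<gamma>)"
proof -
  have "emp_risk L z n (\<Sum>s\<in>{1..T}. (1 / real T) *\<^sub>R w s) \<gamma>
       \<le> (\<Sum>s\<in>{1..T}. (1 / real T) * emp_risk L z n (w s) \<gamma>)"
    by (rule convex_on_sum[OF _ _ convex_emp_risk[OF assms(1,2)]]) (use assms(3) in auto)
  then show ?thesis by (simp add: scaleR_sum_right sum_distrib_left)
qed


theorem theorem2:
  fixes L :: "real ^ 'd \<Rightarrow> real ^ 'e \<Rightarrow> real"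
    and G :: "real ^ 'd \<Rightarrow> real ^ 'e \<Rightarrow> real ^ 'd"
    and z :: "nat \<Rightarrow> real ^ 'e"
    and n :: nat and A B g \<eta> :: real and T :: nat and wbar :: "real ^ 'd"
  assumes dim: "CARD('e) = CARD('d) + 1"
    and convex: "\<And>zz. convex_on UNIV (\<lambda>w. L w zz)"
    and subgrad: "\<And>w zz. is_subgradient (\<lambda>u. L u zz) w (G w zz)"
    and AB: "A \<ge> 0" "B \<ge> 0"
    and growth: "\<And>w zz. (norm (G w zz))\<^sup>2 \<le> A * L w zz + B"
    and n_pos: "n \<ge> 1"
    and g_nonneg: "g \<ge> 0"
    and eta_pos: "\<eta> > 0"
    and step: "1 - 0.5 * A * \<eta> > 0"
    and T_pos: "T \<ge> 1"
  shows
    "expect_idx n T (\<lambda>i. (1 - 0.5 * A * \<eta>) *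
        emp_risk L z n (sgd_what G z \<eta> g i T) (g / (1 - 0.5 * A * \<eta>)))
     \<le> expect_idx n T (\<lambda>i. ((1 - 0.5 * A * \<eta>) / real T) *
        (\<Sum>t=1..T. emp_risk L z n (sgd_w G z \<eta> g i t) (g / (1 - 0.5 * A * \<eta>))))
   \<and> expect_idx n T (\<lambda>i. ((1 - 0.5 * A * \<eta>) / real T) *
        (\<Sum>t=1..T. emp_risk L z n (sgd_w G z \<eta> g i t) (g / (1 - 0.5 * A * \<eta>))))
     \<le> \<eta> / 2 * B + (norm wbar)\<^sup>2 / (2 * \<eta> * real T) + emp_risk L z n wbar g"
proof -
  define c where "c = 1 - 0.5 * A * \<eta>"
  have c: "c > 0" using step by (simp add: c_def)
  define S where "S = idx_seqs n T"
  define N where "N = real n ^ T"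
  have N: "N > 0" using n_pos by (simp add: N_def)
  have finS: "finite S" by (simp add: S_def finite_idx_seqs)
  have ex: "expect_idx n T f = (\<Sum>xs\<in>S. f (idx_of xs)) / N" for f
    by (simp add: expect_idx_def S_def N_def)
  define F where "F w = (1 / real n) * (\<Sum>k=1..n. L w (z k))" for w
  define W where "W xs t = sgd_w G z \<eta> g (idx_of xs) t" for xs t
  define u where "u = wbar"
  have gc: "g / c \<ge> 0" using c g_nonneg by simp
  have p1: "c * emp_risk L z n (sgd_what G z \<eta> g i T) (g / c)
      \<le> (c / real T) * (\<Sum>t=1..T. emp_risk L z n (sgd_w G z \<eta> g i t) (g / c))" for i
  proof -
    have "emp_risk L z n (sgd_what G z \<eta> g i T) (g / c)
        \<le> (1 / real T) * (\<Sum>t=1..T. emp_risk L z n (sgd_w G z \<eta> g i t) (g / c))"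
      unfolding what_avg[OF T_pos] by (rule jensen_risk[OF convex gc T_pos])
    from mult_left_mono[OF this, of c] c show ?thesis by simp
  qed
  have part1: "expect_idx n T (\<lambda>i. c * emp_risk L z n (sgd_what G z \<eta> g i T) (g / c))
      \<le> expect_idx n T (\<lambda>i. (c / real T) * (\<Sum>t=1..T. emp_risk L z n (sgd_w G z \<eta> g i t) (g / c)))"
    unfolding ex using N by (intro divide_right_mono sum_mono p1) simp_all
  define Y1 where "Y1 xs = (1 / real T) * (\<Sum>t=1..T. c * F (W xs t) + g * norm1 (W xs (Suc t)))" for xs
  define Y2 where "Y2 xs = (1 / real T) * (\<Sum>t=1..T. c * L (W xs t) (z (idx_of xs t)) + g * norm1 (W xs (Suc t)))" for xs
  define Z where "Z xs = (1 / (2 * \<eta> * real T)) * ((norm u)^2 + (\<Sum>t=1..T. 2 * \<eta> * L u (z (idx_of xs t)))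
          + real T * (\<eta>^2 * B + 2 * \<eta> * g * norm1 u))" for xs
  define K where "K = (1 / (2 * \<eta> * real T)) * ((norm u)^2 + real T * (2 * \<eta> * F u)
          + real T * (\<eta>^2 * B + 2 * \<eta> * g * norm1 u))"
  have s1: "(\<Sum>xs\<in>S. (c / real T) * (\<Sum>t=1..T. emp_risk L z n (W xs t) (g / c))) \<le> (\<Sum>xs\<in>S. Y1 xs)"
    unfolding Y1_def F_def W_def by (intro sum_mono pw1[OF c T_pos g_nonneg])
  have keyL: "(\<Sum>xs\<in>S. L (W xs t) (z (idx_of xs t))) = (\<Sum>xs\<in>S. F (W xs t))" if t: "t \<in> {1..T}" for t
    unfolding S_def W_def F_def
  proof (rule key_expect[where H="\<lambda>i k. L (sgd_w G z \<eta> g i t) (z k)", OF _ _ n_pos])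
    fix i i' :: "nat \<Rightarrow> nat"
    assume p: "\<And>s. 1 \<le> s \<Longrightarrow> s < t \<Longrightarrow> i s = i' s"
    have "sgd_w G z \<eta> g i t = sgd_w G z \<eta> g i' t" by (rule sgd_w_dep) (simp add: p)
    then show "(\<lambda>k. L (sgd_w G z \<eta> g i t) (z k)) = (\<lambda>k. L (sgd_w G z \<eta> g i' t) (z k))" by simp
  qed (use t in auto)
  have keyU: "(\<Sum>xs\<in>S. L u (z (idx_of xs t))) = (\<Sum>xs\<in>S. F u)" if t: "t \<in> {1..T}" for t
    unfolding S_def F_def
    by (rule key_expect[where H="\<lambda>i k. L u (z k)", OF _ _ n_pos]) (use t in auto)
  have s2: "(\<Sum>xs\<in>S. Y1 xs) = (\<Sum>xs\<in>S. Y2 xs)"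
  proof -
    have "(\<Sum>xs\<in>S. Y1 xs) = (1 / real T) * (\<Sum>t=1..T. c * (\<Sum>xs\<in>S. F (W xs t)) + g * (\<Sum>xs\<in>S. norm1 (W xs (Suc t))))"
      unfolding Y1_def sum_distrib_left[symmetric]
      by (subst sum.swap) (simp add: sum.distrib sum_distrib_left)
    also have "\<dots> = (1 / real T) * (\<Sum>t=1..T. c * (\<Sum>xs\<in>S. L (W xs t) (z (idx_of xs t))) + g * (\<Sum>xs\<in>S. norm1 (W xs (Suc t))))"
      using keyL by simp
    also have "\<dots> = (\<Sum>xs\<in>S. Y2 xs)"
      unfolding Y2_def sum_distrib_left[symmetric]
      by (subst sum.swap) (simp add: sum.distrib sum_distrib_left)
    finally show ?thesis .
  qed
  have s3: "(\<Sum>xs\<in>S. Y2 xs) \<le> (\<Sum>xs\<in>S. Z xs)"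
    unfolding Y2_def Z_def W_def c_def
    by (intro sum_mono pw2[OF subgrad growth g_nonneg eta_pos T_pos])
  have s4: "(\<Sum>xs\<in>S. Z xs) = N * K"
  proof -
    have cardS: "(\<Sum>xs\<in>S. (1::real)) = N" unfolding S_def N_def by (rule card_idx_seqs)
    have "(\<Sum>xs\<in>S. Z xs) = (1 / (2 * \<eta> * real T)) * ((\<Sum>xs\<in>S. (1::real)) * (norm u)^2
          + (\<Sum>t=1..T. 2 * \<eta> * (\<Sum>xs\<in>S. L u (z (idx_of xs t))))
          + (\<Sum>xs\<in>S. (1::real)) * (real T * (\<eta>^2 * B + 2 * \<eta> * g * norm1 u)))"
      unfolding Z_def sum_distrib_left[symmetric]
      by (subst sum.swap) (simp add: sum.distrib sum_distrib_left sum_distrib_right)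
    also have "\<dots> = (1 / (2 * \<eta> * real T)) * (N * (norm u)^2
          + (\<Sum>t=1..T. 2 * \<eta> * (N * F u))
          + N * (real T * (\<eta>^2 * B + 2 * \<eta> * g * norm1 u)))"
      using keyU cardS by (simp add: sum_distrib_right[symmetric])
    also have "\<dots> = N * K"
      by (simp add: K_def algebra_simps)
    finally show ?thesis .
  qed
  have "(\<Sum>xs\<in>S. (c / real T) * (\<Sum>t=1..T. emp_risk L z n (W xs t) (g / c))) \<le> N * K"
    using s1 s2 s3 s4 by linarith
  then have part2: "expect_idx n T (\<lambda>i. (c / real T) * (\<Sum>t=1..T. emp_risk L z n (sgd_w G z \<eta> g i t) (g / c))) \<le> K"
    unfolding ex W_def using N by (simp add: divide_le_eq mult.commute)
  have K: "K = \<eta> / 2 * B + (norm wbar)\<^sup>2 / (2 * \<eta> * real T) + emp_risk L z n wbar g"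
    using eta_pos T_pos by (simp add: K_def u_def emp_risk_def F_def field_simps power2_eq_square)
  show ?thesis using part1 part2 K unfolding c_def by simp
qed

end
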